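(* Let $K$ be either $\{1,2,3\}$ or $\{1,2,4\}$. The set of all groupoid identities $p=q$ satisfying the following conditions forms a basis for $\Sigma_K$. Every variable $x$ occurring in $p$ or $q$ either occurs exactly once in $p$ and exactly once in $q$, or occurs exactly twice in $p$ and exactly twice in $q$. If $x$ occurs exactly once in both $p$ and $q$, then the color of $x$ is the same in $p$ and in $q$. If $x$ occurs twice, then: for $K=\{1,2,3\}$, its two occurrences have colors $\alpha$ and $\beta$ in one of the terms and colors $\gamma$ and $1$ in the other; for $K=\{1,2,4\}$, its two occurrences have colors $\alpha$ and $\gamma$ in one of the terms and colors $\beta$ and $1$ in the other.
   Context: Let $f_1(x,y)=x+y$, $f_2(x,y)=x-y$, $f_3(x,y)=-x+y$, $f_4(x,y)=-x-y$ on $\mathbb{Z}$. For $K\subseteq\{1,2,3,4\}$, $\Sigma_K$ is the set of groupoid identities satisfied in $\mathbb{Z}$ by $f_k$ for every $k\in K$. Let $\mathbf{KL}=\{1,\alpha,\beta,\gamma\}$ be the Klein 4-group ($\alpha^2=\beta^2=1$, $\alpha\beta=\gamma$). The color of an occurrence of a variable in a term $p$ is the element of $\mathbf{KL}$ obtained by following the path from the whole term down to that occurrence, starting with $1$ and multiplying by $\alpha$ each time one passes to the left factor of a product and by $\beta$ each time one passes to the right factor. A basis for $\Sigma_K$ is a set of identities whose equational consequences are exactly $\Sigma_K$. *)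

theory Defs
  imports "HOL-Library.Multiset"
begin

datatype gterm = Var nat | Mul gterm gterm

fun gsubst :: "(nat \<Rightarrow> gterm) \<Rightarrow> gterm \<Rightarrow> gterm" where
  "gsubst \<sigma> (Var x) = \<sigma> x"
| "gsubst \<sigma> (Mul p q) = Mul (gsubst \<sigma> p) (gsubst \<sigma> q)"

fun geval :: "(int \<Rightarrow> int \<Rightarrow> int) \<Rightarrow> (nat \<Rightarrow> int) \<Rightarrow> gterm \<Rightarrow> int" where
  "geval f v (Var x) = v x"
| "geval f v (Mul p q) = f (geval f v p) (geval f v q)"

fun fop :: "nat \<Rightarrow> int \<Rightarrow> int \<Rightarrow> int" where
  "fop k x y = (if k = 1 then x + y else if k = 2 then x - y
                else if k = 3 then - x + y else - x - y)"

definition Sigma :: "nat set \<Rightarrow> (gterm \<times> gterm) set" where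
  "Sigma K = {(p, q). \<forall>k\<in>K. \<forall>v. geval (fop k) v p = geval (fop k) v q}"

inductive eq_conseq :: "(gterm \<times> gterm) set \<Rightarrow> gterm \<Rightarrow> gterm \<Rightarrow> bool"
  for E where
  ax: "(p, q) \<in> E \<Longrightarrow> eq_conseq E (gsubst \<sigma> p) (gsubst \<sigma> q)"
| refl: "eq_conseq E p p"
| sym: "eq_conseq E p q \<Longrightarrow> eq_conseq E q p"
| trans: "eq_conseq E p q \<Longrightarrow> eq_conseq E q r \<Longrightarrow> eq_conseq E p r"
| cong: "eq_conseq E p p' \<Longrightarrow> eq_conseq E q q' \<Longrightarrow> eq_conseq E (Mul p q) (Mul p' q')"

definition is_basis :: "(gterm \<times> gterm) set \<Rightarrow> (gterm \<times> gterm) set \<Rightarrow> bool" where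
  "is_basis B S \<longleftrightarrow> {(p, q). eq_conseq B p q} = S"

text \<open>Klein 4-group as bool \<times> bool with componentwise xor.\<close>
type_synonym klein = "bool \<times> bool"

definition kmul :: "klein \<Rightarrow> klein \<Rightarrow> klein" where
  "kmul a b = (fst a \<noteq> fst b, snd a \<noteq> snd b)"

definition k1 :: klein where "k1 = (False, False)"
definition k\<alpha> :: klein where "k\<alpha> = (True, False)"
definition k\<beta> :: klein where "k\<beta> = (False, True)"
definition k\<gamma> :: klein where "k\<gamma> = (True, True)"

fun colors :: "gterm \<Rightarrow> nat \<Rightarrow> klein multiset" where
  "colors (Var y) x = (if y = x then {#k1#} else {#})"
| "colors (Mul p q) x = image_mset (kmul k\<alpha>) (colors p x) + image_mset (kmul k\<beta>) (colors q x)"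

fun vars :: "gterm \<Rightarrow> nat set" where
  "vars (Var y) = {y}"
| "vars (Mul p q) = vars p \<union> vars q"

definition basis_set :: "klein \<Rightarrow> klein \<Rightarrow> klein \<Rightarrow> klein \<Rightarrow> (gterm \<times> gterm) set" where
  "basis_set a b c d = {(p, q). \<forall>x \<in> vars p \<union> vars q.
      (size (colors p x) = 1 \<and> size (colors q x) = 1 \<and> colors p x = colors q x)
    \<or> (size (colors p x) = 2 \<and> size (colors q x) = 2 \<and>
        ((colors p x = {#a, b#} \<and> colors q x = {#c, d#}) \<or>
         (colors p x = {#c, d#} \<and> colors q x = {#a, b#})))}"

definition B123 :: "(gterm \<times> gterm) set" where
  "B123 = basis_set k\<alpha> k\<beta> k\<gamma> k1"

definition B124 :: "(gterm \<times> gterm) set" where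
  "B124 = basis_set k\<alpha> k\<gamma> k\<beta> k1"

end

theory Submission
  imports Defs "HOL-Library.Nat_Bijection"
begin


definition wt :: "nat \<Rightarrow> klein \<Rightarrow> int" where
 "wt k c = (if k = 1 then 1 else if k = 2 then (if snd c then -1 else 1)
   else if k = 3 then (if fst c then -1 else 1)
   else (if fst c then -1 else 1) * (if snd c then -1 else 1))"

lemma wt_mul: "wt k (kmul a b) = wt k a * wt k b"
  by (cases a; cases b) (auto simp: wt_def kmul_def)

lemma fop_wt: "fop k x y = wt k k\<alpha> * x + wt k k\<beta> * y"
  by (simp add: wt_def k\<alpha>_def k\<beta>_def)

definition wsum :: "nat \<Rightarrow> klein multiset \<Rightarrow> int" where
  "wsum k M = sum_mset (image_mset (wt k) M)"

lemma wsum_image: "wsum k (image_mset (kmul a) M) = wt k a * wsum k M"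
  by (induction M) (simp_all add: wsum_def wt_mul algebra_simps)

lemma wsum_plus: "wsum k (M + N) = wsum k M + wsum k N"
  by (simp add: wsum_def)

lemma vars_colors: "x \<in> vars p \<longleftrightarrow> colors p x \<noteq> {#}"
  by (induction p) auto

lemma finite_vars: "finite (vars p)" by (induction p) auto

lemma geval_sum: "finite V \<Longrightarrow> vars p \<subseteq> V \<Longrightarrow>
   geval (fop k) v p = (\<Sum>y\<in>V. v y * wsum k (colors p y))"
proof (induction p)
  case (Var x)
  have "(\<Sum>y\<in>V. v y * wsum k (colors (Var x) y)) = (\<Sum>y\<in>V. if x = y then v y else 0)"
    by (intro sum.cong) (auto simp: wsum_def wt_def k1_def)
  then show ?case using Var by simp
next
  case (Mul p q)
  have ep: "geval (fop k) v p = (\<Sum>y\<in>V. v y * wsum k (colors p y))"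
    using Mul.IH(1)[OF Mul.prems(1)] Mul.prems(2) by (simp del: fop.simps)
  have eq: "geval (fop k) v q = (\<Sum>y\<in>V. v y * wsum k (colors q y))"
    using Mul.IH(2)[OF Mul.prems(1)] Mul.prems(2) by (simp del: fop.simps)
  have "geval (fop k) v (Mul p q) = wt k k\<alpha> * (\<Sum>y\<in>V. v y * wsum k (colors p y))
     + wt k k\<beta> * (\<Sum>y\<in>V. v y * wsum k (colors q y))"
    by (simp only: geval.simps fop_wt ep eq)
  also have "\<dots> = (\<Sum>y\<in>V. v y * wsum k (colors (Mul p q) y))"
    by (simp add: wsum_plus wsum_image sum_distrib_left sum.distrib algebra_simps)
  finally show ?case .
qed

lemma geval_subst: "geval f v (gsubst \<sigma> p) = geval f (\<lambda>x. geval f v (\<sigma> x)) p"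
  by (induction p) auto

fun occm :: "gterm \<Rightarrow> (bool list \<times> nat) multiset" where
 "occm (Var x) = {#([], x)#}"
| "occm (Mul p q) = image_mset (\<lambda>u. (True # fst u, snd u)) (occm p)
     + image_mset (\<lambda>u. (False # fst u, snd u)) (occm q)"

fun pcol :: "bool list \<Rightarrow> klein" where
 "pcol [] = k1" | "pcol (b # \<pi>) = kmul (if b then k\<alpha> else k\<beta>) (pcol \<pi>)"

lemma colors_occm: "colors p x = image_mset (pcol \<circ> fst) (filter_mset (\<lambda>u. snd u = x) (occm p))"
  by (induction p) (auto simp: filter_mset_image_mset multiset.map_comp o_def)

fun rel :: "(bool list \<Rightarrow> nat \<Rightarrow> nat) \<Rightarrow> gterm \<Rightarrow> gterm" where
 "rel h (Var x) = Var (prod_encode (x, h [] x))"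
| "rel h (Mul p q) = Mul (rel (\<lambda>\<pi>. h (True#\<pi>)) p) (rel (\<lambda>\<pi>. h (False#\<pi>)) q)"

definition \<sigma>0 :: "nat \<Rightarrow> gterm" where "\<sigma>0 n = Var (fst (prod_decode n))"

lemma gsubst_rel: "gsubst \<sigma>0 (rel h p) = p"
  by (induction p arbitrary: h) (simp_all add: \<sigma>0_def)

lemma occm_rel: "occm (rel h p) = image_mset (\<lambda>u. (fst u, prod_encode (snd u, h (fst u) (snd u)))) (occm p)"
  by (induction p arbitrary: h) (simp_all add: multiset.map_comp o_def)

definition dm :: "'z multiset \<Rightarrow> bool" where "dm M \<longleftrightarrow> (\<forall>x. count M x \<le> 1)"

lemma count_image_Cons: "count (image_mset (Cons b) M) (b' # \<pi>) = (if b = b' then count M \<pi> else 0)"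
  by (induction M) auto

lemma count_image_Cons_Nil: "count (image_mset (Cons b) M) [] = 0"
  by (induction M) auto

lemma dm_occm: "count (image_mset fst (occm p)) \<pi> \<le> 1"
proof (induction p arbitrary: \<pi>)
  case (Var x) then show ?case by auto
next
  case (Mul p q)
  have e: "image_mset fst (occm (Mul p q)) = image_mset (Cons True) (image_mset fst (occm p))
     + image_mset (Cons False) (image_mset fst (occm q))"
    by (simp add: multiset.map_comp o_def)
  show ?case
  proof (cases \<pi>)
    case Nil then show ?thesis unfolding e by (simp add: count_image_Cons_Nil)
  next
    case (Cons b \<pi>') then show ?thesis unfolding e using Mul by (cases b) (auto simp: count_image_Cons)
  qed
qed



definition PP :: "klein \<Rightarrow> klein \<Rightarrow> klein \<Rightarrow> klein \<Rightarrow> klein multiset \<Rightarrow> klein multiset \<Rightarrow> bool" where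
 "PP a b c d M N \<longleftrightarrow> (M = {#} \<and> N = {#}) \<or> (size M = 1 \<and> size N = 1 \<and> M = N)
    \<or> (M = {#a,b#} \<and> N = {#c,d#}) \<or> (M = {#c,d#} \<and> N = {#a,b#})"

lemma dm_add: "dm (add_mset x M) \<Longrightarrow> x \<notin># M \<and> dm M"
proof -
  assume h: "dm (add_mset x M)"
  have "count (add_mset x M) x \<le> 1" using h unfolding dm_def by blast
  then have "count M x = 0" by simp
  moreover have "count M y \<le> 1" for y
  proof -
    have "count M y \<le> count (add_mset x M) y" by simp
    also have "\<dots> \<le> 1" using h unfolding dm_def by blast
    finally show ?thesis .
  qed
  ultimately show ?thesis unfolding dm_def by (simp add: count_eq_zero_iff)
qed

lemma match:
  fixes A B :: "'z multiset" and col :: "'z \<Rightarrow> klein"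
  assumes "dm A" "dm B" "a \<noteq> b" "c \<noteq> d" "c \<noteq> a" "c \<noteq> b" "d \<noteq> a" "d \<noteq> b"
    and "image_mset col A + repeat_mset n {#a,b#} = image_mset col B + repeat_mset n {#c,d#}"
  shows "\<exists>(gA::'z\<Rightarrow>nat) (gB::'z\<Rightarrow>nat). \<forall>k. PP a b c d (image_mset col (filter_mset (\<lambda>z. gA z = k) A))
                                (image_mset col (filter_mset (\<lambda>z. gB z = k) B))"
  using assms
proof (induction "size A" arbitrary: A B n rule: less_induct)
  case less
  note eq = less.prems(9)
  show ?case
  proof (cases "n > 0")
    case True
    then obtain m where n: "n = Suc m" by (cases n) auto
    have "count (image_mset col A) c \<noteq> 0" "count (image_mset col A) d \<noteq> 0"
      using arg_cong[OF eq, of "\<lambda>M. count M c"] arg_cong[OF eq, of "\<lambda>M. count M d"] less.prems(3-8) n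
      by auto
    then have cA: "c \<in># image_mset col A" "d \<in># image_mset col A"
      by (auto intro: count_inI)
    have "count (image_mset col B) a \<noteq> 0" "count (image_mset col B) b \<noteq> 0"
      using arg_cong[OF eq, of "\<lambda>M. count M a"] arg_cong[OF eq, of "\<lambda>M. count M b"] less.prems(3-8) n
      by auto
    then have cB: "a \<in># image_mset col B" "b \<in># image_mset col B"
      by (auto intro: count_inI)
    obtain ac where ac: "ac \<in># A" "col ac = c" using cA by auto
    obtain ad where ad: "ad \<in># A" "col ad = d" using cA by auto
    obtain ba where ba: "ba \<in># B" "col ba = a" using cB by auto
    obtain bb where bb: "bb \<in># B" "col bb = b" using cB by auto
    obtain A1 where A1: "A = add_mset ac A1" using ac multi_member_split by metis
    have "ad \<in># A1" using ad ac A1 less.prems(4) by auto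
    then obtain A' where A': "A = add_mset ac (add_mset ad A')" using A1 multi_member_split by metis
    obtain B1 where B1: "B = add_mset ba B1" using ba multi_member_split by metis
    have "bb \<in># B1" using ba bb B1 less.prems(3) by auto
    then obtain B' where B': "B = add_mset ba (add_mset bb B')" using B1 multi_member_split by metis
    have dA: "ac \<notin># add_mset ad A'" "ad \<notin># A'" "dm A'"
      using dm_add[of ac "add_mset ad A'"] dm_add[of ad A'] less.prems(1) A' by auto
    have dB: "ba \<notin># add_mset bb B'" "bb \<notin># B'" "dm B'"
      using dm_add[of ba "add_mset bb B'"] dm_add[of bb B'] less.prems(2) B' by auto
    have eq': "image_mset col A' + repeat_mset m {#a,b#} = image_mset col B' + repeat_mset m {#c,d#}"
    proof -
      have eA: "image_mset col A + repeat_mset n {#a,b#} = {#a,b,c,d#} + (image_mset col A' + repeat_mset m {#a,b#})"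
        using A' ac ad n by (simp add: add_mset_commute)
      have eB: "image_mset col B + repeat_mset n {#c,d#} = {#a,b,c,d#} + (image_mset col B' + repeat_mset m {#c,d#})"
        using B' ba bb n by (simp add: add_mset_commute)
      show ?thesis using eq unfolding eA eB by simp
    qed
    have "size A' < size A" using A' by simp
    from less.hyps[OF this dA(3) dB(3) less.prems(3-8) eq']
    obtain gA gB :: "'z \<Rightarrow> nat" where g: "\<forall>k. PP a b c d (image_mset col (filter_mset (\<lambda>z. gA z = k) A'))
                                (image_mset col (filter_mset (\<lambda>z. gB z = k) B'))" by blast
    define hA where "hA z = (if z = ac \<or> z = ad then 0 else Suc (gA z))" for z
    define hB where "hB z = (if z = ba \<or> z = bb then 0 else Suc (gB z))" for z
    have fA0: "filter_mset (\<lambda>z. hA z = 0) A = {#ac, ad#}"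
    proof -
      have "filter_mset (\<lambda>z. hA z = 0) A' = filter_mset (\<lambda>z. False) A'"
        using dA by (intro filter_mset_cong0) (auto simp: hA_def)
      then have "filter_mset (\<lambda>z. hA z = 0) A' = {#}" by simp
      moreover have "hA ac = 0" "hA ad = 0" by (simp_all add: hA_def)
        ultimately show ?thesis using A' by simp
    qed
    have fB0: "filter_mset (\<lambda>z. hB z = 0) B = {#ba, bb#}"
    proof -
      have "filter_mset (\<lambda>z. hB z = 0) B' = filter_mset (\<lambda>z. False) B'"
        using dB by (intro filter_mset_cong0) (auto simp: hB_def)
      then have "filter_mset (\<lambda>z. hB z = 0) B' = {#}" by simp
      moreover have "hB ba = 0" "hB bb = 0" by (simp_all add: hB_def)
        ultimately show ?thesis using B' by simp
    qed
    have fAS: "filter_mset (\<lambda>z. hA z = Suc k) A = filter_mset (\<lambda>z. gA z = k) A'" for k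
    proof -
      have "filter_mset (\<lambda>z. hA z = Suc k) A' = filter_mset (\<lambda>z. gA z = k) A'"
        using dA by (intro filter_mset_cong0) (auto simp: hA_def)
      moreover have "hA ac = 0" "hA ad = 0" by (simp_all add: hA_def)
      ultimately show ?thesis using A' by simp
    qed
    have fBS: "filter_mset (\<lambda>z. hB z = Suc k) B = filter_mset (\<lambda>z. gB z = k) B'" for k
    proof -
      have "filter_mset (\<lambda>z. hB z = Suc k) B' = filter_mset (\<lambda>z. gB z = k) B'"
        using dB by (intro filter_mset_cong0) (auto simp: hB_def)
      moreover have "hB ba = 0" "hB bb = 0" by (simp_all add: hB_def)
      ultimately show ?thesis using B' by simp
    qed
    have "\<forall>k. PP a b c d (image_mset col (filter_mset (\<lambda>z. hA z = k) A))
                                (image_mset col (filter_mset (\<lambda>z. hB z = k) B))"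
    proof
      fix k show "PP a b c d (image_mset col (filter_mset (\<lambda>z. hA z = k) A))
                                (image_mset col (filter_mset (\<lambda>z. hB z = k) B))"
      proof (cases k)
        case 0
        have h1: "image_mset col (filter_mset (\<lambda>z. hA z = k) A) = {#c,d#}"
          unfolding 0 fA0 using ac ad by simp
        have h2: "image_mset col (filter_mset (\<lambda>z. hB z = k) B) = {#a,b#}"
          unfolding 0 fB0 using ba bb by simp
        show ?thesis unfolding PP_def
          by (rule disjI2, rule disjI2, rule disjI2, rule conjI, fact h1, fact h2)
      next
        case (Suc k')
        have "PP a b c d (image_mset col (filter_mset (\<lambda>z. gA z = k') A'))
                                (image_mset col (filter_mset (\<lambda>z. gB z = k') B'))" using g by blast
        then show ?thesis unfolding Suc fAS fBS .
      qed
    qed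
    then show ?thesis by blast
  next
    case False
    then have eq0: "image_mset col A = image_mset col B" using eq by simp
    show ?thesis
    proof (cases "A = {#}")
      case True
      then have "B = {#}" using eq0 by simp
      then show ?thesis using True
        by (intro exI[of _ "\<lambda>_. 0"]) (simp add: PP_def)
    next
      case False
      then obtain a0 where a0: "a0 \<in># A" by auto
      then have "col a0 \<in># image_mset col A" by simp
      then have "col a0 \<in># image_mset col B" using eq0 by simp
      then obtain b0 where b0: "b0 \<in># B" "col b0 = col a0" by auto
      obtain A' where A': "A = add_mset a0 A'" using a0 multi_member_split by metis
      obtain B' where B': "B = add_mset b0 B'" using b0 multi_member_split by metis
      have dA: "a0 \<notin># A'" "dm A'" using dm_add less.prems(1) A' by metis+
      have dB: "b0 \<notin># B'" "dm B'" using dm_add less.prems(2) B' by metis+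
      have eq': "image_mset col A' + repeat_mset 0 {#a,b#} = image_mset col B' + repeat_mset 0 {#c,d#}"
        using eq0 A' B' b0 by simp
      have "size A' < size A" using A' by simp
      from less.hyps[OF this dA(2) dB(2) less.prems(3-8) eq']
      obtain gA gB :: "'z \<Rightarrow> nat" where g: "\<forall>k. PP a b c d (image_mset col (filter_mset (\<lambda>z. gA z = k) A'))
                                  (image_mset col (filter_mset (\<lambda>z. gB z = k) B'))" by blast
      define hA where "hA z = (if z = a0 then 0 else Suc (gA z))" for z
      define hB where "hB z = (if z = b0 then 0 else Suc (gB z))" for z
      have fA0: "filter_mset (\<lambda>z. hA z = 0) A = {#a0#}"
      proof -
        have "filter_mset (\<lambda>z. hA z = 0) A' = filter_mset (\<lambda>z. False) A'"
          using dA by (intro filter_mset_cong0) (auto simp: hA_def)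
        then have "filter_mset (\<lambda>z. hA z = 0) A' = {#}" by simp
        moreover have "hA a0 = 0" by (simp add: hA_def)
        ultimately show ?thesis using A' by simp
      qed
      have fB0: "filter_mset (\<lambda>z. hB z = 0) B = {#b0#}"
      proof -
        have "filter_mset (\<lambda>z. hB z = 0) B' = filter_mset (\<lambda>z. False) B'"
          using dB by (intro filter_mset_cong0) (auto simp: hB_def)
        then have "filter_mset (\<lambda>z. hB z = 0) B' = {#}" by simp
        moreover have "hB b0 = 0" by (simp add: hB_def)
        ultimately show ?thesis using B' by simp
      qed
      have fAS: "filter_mset (\<lambda>z. hA z = Suc k) A = filter_mset (\<lambda>z. gA z = k) A'" for k
      proof -
        have "filter_mset (\<lambda>z. hA z = Suc k) A' = filter_mset (\<lambda>z. gA z = k) A'"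
          using dA by (intro filter_mset_cong0) (auto simp: hA_def)
        moreover have "hA a0 = 0" by (simp add: hA_def)
        ultimately show ?thesis using A' by simp
      qed
      have fBS: "filter_mset (\<lambda>z. hB z = Suc k) B = filter_mset (\<lambda>z. gB z = k) B'" for k
      proof -
        have "filter_mset (\<lambda>z. hB z = Suc k) B' = filter_mset (\<lambda>z. gB z = k) B'"
          using dB by (intro filter_mset_cong0) (auto simp: hB_def)
        moreover have "hB b0 = 0" by (simp add: hB_def)
        ultimately show ?thesis using B' by simp
      qed
      have "\<forall>k. PP a b c d (image_mset col (filter_mset (\<lambda>z. hA z = k) A))
                                  (image_mset col (filter_mset (\<lambda>z. hB z = k) B))"
      proof
        fix k show "PP a b c d (image_mset col (filter_mset (\<lambda>z. hA z = k) A))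
                                  (image_mset col (filter_mset (\<lambda>z. hB z = k) B))"
        proof (cases k)
          case 0
          have h1: "image_mset col (filter_mset (\<lambda>z. hA z = k) A) = {#col a0#}"
            unfolding 0 fA0 by simp
          have h2: "image_mset col (filter_mset (\<lambda>z. hB z = k) B) = {#col a0#}"
            unfolding 0 fB0 using b0 by simp
          show ?thesis unfolding PP_def h1 h2
            by (rule disjI2, rule disjI1) simp
        next
          case (Suc k')
        have "PP a b c d (image_mset col (filter_mset (\<lambda>z. gA z = k') A'))
                                (image_mset col (filter_mset (\<lambda>z. gB z = k') B'))" using g by blast
        then show ?thesis unfolding Suc fAS fBS .
        qed
      qed
      then show ?thesis by blast
    qed
  qed
qed



lemma PP_sym: "PP c d a b M N \<Longrightarrow> PP a b c d M N"
  unfolding PP_def by blast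

lemma sound:
  assumes "\<And>p q. (p,q) \<in> E \<Longrightarrow> (p,q) \<in> Sigma K"
  shows "eq_conseq E p q \<Longrightarrow> (p,q) \<in> Sigma K"
proof (induction rule: eq_conseq.induct)
  case (ax p q \<sigma>)
  then show ?case using assms[OF ax] by (auto simp: Sigma_def geval_subst)
next
  case (refl p) then show ?case by (simp add: Sigma_def)
next
  case (sym p q) then show ?case by (simp add: Sigma_def)
next
  case (trans p q r) then show ?case by (simp add: Sigma_def)
next
  case (cong p p' q q') then show ?case by (simp add: Sigma_def)
qed

lemma colors_rel: "colors (rel h p) (prod_encode (x,k)) =
  image_mset pcol (filter_mset (\<lambda>z. h z x = k) (image_mset fst (filter_mset (\<lambda>u. snd u = x) (occm p))))"
proof -
  have "filter_mset (\<lambda>u. snd u = x \<and> h (fst u) (snd u) = k) (occm p) = filter_mset (\<lambda>u. snd u = x \<and> h (fst u) x = k) (occm p)"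
    by (rule filter_mset_cong0) auto
  then show ?thesis unfolding colors_occm occm_rel
    by (simp add: filter_mset_image_mset filter_filter_mset multiset.map_comp o_def conj_commute)
qed

lemma colors_fst: "colors p x = image_mset pcol (image_mset fst (filter_mset (\<lambda>u. snd u = x) (occm p)))"
  unfolding colors_occm by (simp add: multiset.map_comp)

lemma dm_fst: "dm (image_mset fst (filter_mset P (occm p)))"
  unfolding dm_def
proof
  fix \<pi>
  have "image_mset fst (filter_mset P (occm p)) \<subseteq># image_mset fst (occm p)"
    by (intro image_mset_subseteq_mono multiset_filter_subset)
  then have "count (image_mset fst (filter_mset P (occm p))) \<pi> \<le> count (image_mset fst (occm p)) \<pi>"
    by (simp add: mset_subset_eq_count)
  then show "count (image_mset fst (filter_mset P (occm p))) \<pi> \<le> 1" using dm_occm le_trans by blast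
qed

lemma complete:
  assumes d: "a \<noteq> b" "c \<noteq> d" "c \<noteq> a" "c \<noteq> b" "d \<noteq> a" "d \<noteq> b"
    and key: "\<And>x. \<exists>n. colors p x + repeat_mset n {#a,b#} = colors q x + repeat_mset n {#c,d#}
                    \<or> colors p x + repeat_mset n {#c,d#} = colors q x + repeat_mset n {#a,b#}"
  shows "eq_conseq (basis_set a b c d) p q"
proof -
  define Ax where "Ax x = image_mset fst (filter_mset (\<lambda>u. snd u = x) (occm p))" for x
  define Bx where "Bx x = image_mset fst (filter_mset (\<lambda>u. snd u = x) (occm q))" for x
  have "\<forall>x. \<exists>g::(bool list \<Rightarrow> nat) \<times> (bool list \<Rightarrow> nat). \<forall>k. PP a b c d (image_mset pcol (filter_mset (\<lambda>z. fst g z = k) (Ax x)))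
                          (image_mset pcol (filter_mset (\<lambda>z. snd g z = k) (Bx x)))"
  proof
    fix x
    obtain n where n: "image_mset pcol (Ax x) + repeat_mset n {#a,b#} = image_mset pcol (Bx x) + repeat_mset n {#c,d#}
                    \<or> image_mset pcol (Ax x) + repeat_mset n {#c,d#} = image_mset pcol (Bx x) + repeat_mset n {#a,b#}"
      using key[of x] unfolding colors_fst Ax_def Bx_def by blast
    have dA: "dm (Ax x)" and dB: "dm (Bx x)" unfolding Ax_def Bx_def by (rule dm_fst)+
    have "\<exists>(gA::bool list\<Rightarrow>nat) (gB::bool list\<Rightarrow>nat). \<forall>k. PP a b c d (image_mset pcol (filter_mset (\<lambda>z. gA z = k) (Ax x)))
                          (image_mset pcol (filter_mset (\<lambda>z. gB z = k) (Bx x)))"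
    proof (cases "image_mset pcol (Ax x) + repeat_mset n {#a,b#} = image_mset pcol (Bx x) + repeat_mset n {#c,d#}")
      case True
      then show ?thesis using match[OF dA dB d True] by blast
    next
      case False
      then have e: "image_mset pcol (Ax x) + repeat_mset n {#c,d#} = image_mset pcol (Bx x) + repeat_mset n {#a,b#}"
        using n by blast
      have "c \<noteq> d" "a \<noteq> b" "a \<noteq> c" "a \<noteq> d" "b \<noteq> c" "b \<noteq> d" using d by auto
      from match[OF dA dB this e] show ?thesis using PP_sym by blast
    qed
    then obtain gA gB :: "bool list \<Rightarrow> nat" where gg: "\<forall>k. PP a b c d (image_mset pcol (filter_mset (\<lambda>z. gA z = k) (Ax x)))
                          (image_mset pcol (filter_mset (\<lambda>z. gB z = k) (Bx x)))" by blast
    show "\<exists>g::(bool list \<Rightarrow> nat) \<times> (bool list \<Rightarrow> nat). \<forall>k. PP a b c d (image_mset pcol (filter_mset (\<lambda>z. fst g z = k) (Ax x)))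
                          (image_mset pcol (filter_mset (\<lambda>z. snd g z = k) (Bx x)))"
      by (rule exI[of _ "(gA,gB)"]) (simp add: gg)
  qed
  from choice[OF this] obtain G :: "nat \<Rightarrow> (bool list \<Rightarrow> nat) \<times> (bool list \<Rightarrow> nat)" where G: "\<And>x k. PP a b c d (image_mset pcol (filter_mset (\<lambda>z. fst (G x) z = k) (Ax x)))
                          (image_mset pcol (filter_mset (\<lambda>z. snd (G x) z = k) (Bx x)))" by blast
  define hp where "hp \<pi> x = fst (G x) \<pi>" for \<pi> x
  define hq where "hq \<pi> x = snd (G x) \<pi>" for \<pi> x
  have cp: "colors (rel hp p) (prod_encode (x,k)) = image_mset pcol (filter_mset (\<lambda>z. fst (G x) z = k) (Ax x))" for x k
    unfolding colors_rel Ax_def hp_def ..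
  have cq: "colors (rel hq q) (prod_encode (x,k)) = image_mset pcol (filter_mset (\<lambda>z. snd (G x) z = k) (Bx x))" for x k
    unfolding colors_rel Bx_def hq_def ..
  have all: "\<forall>y \<in> vars (rel hp p) \<union> vars (rel hq q). size (colors (rel hp p) y) = 1 \<and> size (colors (rel hq q) y) = 1 \<and> colors (rel hp p) y = colors (rel hq q) y \<or>
          size (colors (rel hp p) y) = 2 \<and> size (colors (rel hq q) y) = 2 \<and>
          (colors (rel hp p) y = {#a, b#} \<and> colors (rel hq q) y = {#c, d#} \<or>
           colors (rel hp p) y = {#c, d#} \<and> colors (rel hq q) y = {#a, b#})"
  proof
    fix y assume y: "y \<in> vars (rel hp p) \<union> vars (rel hq q)"
    obtain x k where yk: "y = prod_encode (x,k)" by (metis prod_decode_inverse surj_pair)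
    have PPy: "PP a b c d (colors (rel hp p) y) (colors (rel hq q) y)" using G[of x k] unfolding yk cp cq .
    have ne: "\<not> (colors (rel hp p) y = {#} \<and> colors (rel hq q) y = {#})"
      using y vars_colors by blast
    show "size (colors (rel hp p) y) = 1 \<and> size (colors (rel hq q) y) = 1 \<and> colors (rel hp p) y = colors (rel hq q) y \<or>
          size (colors (rel hp p) y) = 2 \<and> size (colors (rel hq q) y) = 2 \<and>
          (colors (rel hp p) y = {#a, b#} \<and> colors (rel hq q) y = {#c, d#} \<or>
           colors (rel hp p) y = {#c, d#} \<and> colors (rel hq q) y = {#a, b#})"
      using PPy ne unfolding PP_def by auto
  qed
  then have mem: "(rel hp p, rel hq q) \<in> basis_set a b c d"
    unfolding basis_set_def by simp
  from eq_conseq.ax[OF mem, of \<sigma>0] show ?thesis by (simp add: gsubst_rel)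
qed



lemma klein_cases: "c = k1 \<or> c = k\<alpha> \<or> c = k\<beta> \<or> c = k\<gamma>"
  by (cases c) (auto simp: k1_def k\<alpha>_def k\<beta>_def k\<gamma>_def)

lemma kdist: "k1 \<noteq> k\<alpha>" "k1 \<noteq> k\<beta>" "k1 \<noteq> k\<gamma>" "k\<alpha> \<noteq> k\<beta>" "k\<alpha> \<noteq> k\<gamma>" "k\<beta> \<noteq> k\<gamma>"
  by (auto simp: k1_def k\<alpha>_def k\<beta>_def k\<gamma>_def)

lemma wsum_expand: "wsum k M = int (count M k1) * wt k k1 + int (count M k\<alpha>) * wt k k\<alpha>
   + int (count M k\<beta>) * wt k k\<beta> + int (count M k\<gamma>) * wt k k\<gamma>"
proof (induction M)
  case empty then show ?case by (simp add: wsum_def)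
next
  case (add c M)
  have "wsum k (add_mset c M) = wt k c + wsum k M" by (simp add: wsum_def)
  then show ?case using add klein_cases[of c] kdist by (auto simp: algebra_simps)
qed

lemma sigma_wsum:
  assumes "(p,q) \<in> Sigma K" "k \<in> K"
  shows "wsum k (colors p x) = wsum k (colors q x)"
proof -
  define V where "V = insert x (vars p \<union> vars q)"
  have fV: "finite V" unfolding V_def by (simp add: finite_vars)
  define v where "v y = (if y = x then 1 else 0::int)" for y
  have s: "(\<Sum>y\<in>V. v y * wsum k (colors r y)) = wsum k (colors r x)" for r
  proof -
    have "(\<Sum>y\<in>V. v y * wsum k (colors r y)) = (\<Sum>y\<in>V. if y = x then wsum k (colors r y) else 0)"
      by (rule sum.cong) (auto simp: v_def)
    also have "\<dots> = wsum k (colors r x)" using fV by (simp add: sum.delta V_def)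
    finally show ?thesis .
  qed
  have "geval (fop k) v p = geval (fop k) v q" using assms unfolding Sigma_def by blast
  moreover have "geval (fop k) v p = wsum k (colors p x)"
  proof -
    have "vars p \<subseteq> V" by (auto simp: V_def)
    from geval_sum[OF fV this, of k v] show ?thesis using s[of p] by (simp only:)
  qed
  moreover have "geval (fop k) v q = wsum k (colors q x)"
  proof -
    have "vars q \<subseteq> V" by (auto simp: V_def)
    from geval_sum[OF fV this, of k v] show ?thesis using s[of q] by (simp only:)
  qed
  ultimately show ?thesis by simp
qed

lemma wt_vals:
  "wt 1 k1 = 1" "wt 1 k\<alpha> = 1" "wt 1 k\<beta> = 1" "wt 1 k\<gamma> = 1"
  "wt 2 k1 = 1" "wt 2 k\<alpha> = 1" "wt 2 k\<beta> = -1" "wt 2 k\<gamma> = -1"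
  "wt 3 k1 = 1" "wt 3 k\<alpha> = -1" "wt 3 k\<beta> = 1" "wt 3 k\<gamma> = -1"
  "wt 4 k1 = 1" "wt 4 k\<alpha> = -1" "wt 4 k\<beta> = -1" "wt 4 k\<gamma> = 1"
  by (simp_all add: wt_def k1_def k\<alpha>_def k\<beta>_def k\<gamma>_def)

lemma basis_wsum:
  assumes "(p,q) \<in> basis_set a b c d" "wt k a + wt k b = wt k c + wt k d"
  shows "wsum k (colors p y) = wsum k (colors q y)"
proof (cases "y \<in> vars p \<union> vars q")
  case True
  have "(size (colors p y) = 1 \<and> size (colors q y) = 1 \<and> colors p y = colors q y) \<or>
          (size (colors p y) = 2 \<and> size (colors q y) = 2 \<and>
          (colors p y = {#a, b#} \<and> colors q y = {#c, d#} \<or>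
           colors p y = {#c, d#} \<and> colors q y = {#a, b#}))"
    using True assms(1) unfolding basis_set_def by blast
  then show ?thesis using assms(2) by (auto simp: wsum_def)
next
  case False
  then show ?thesis using vars_colors by auto
qed

lemma basis_sigma:
  assumes "(p,q) \<in> basis_set a b c d" "\<And>k. k \<in> K \<Longrightarrow> wt k a + wt k b = wt k c + wt k d"
  shows "(p,q) \<in> Sigma K"
  unfolding Sigma_def
proof (clarify)
  fix k v assume k: "k \<in> K"
  define V where "V = vars p \<union> vars q"
  have fV: "finite V" unfolding V_def by (simp add: finite_vars)
  show "geval (fop k) v p = geval (fop k) v q"
  proof -
    have "vars p \<subseteq> V" "vars q \<subseteq> V" by (auto simp: V_def)
    from geval_sum[OF fV this(1), of k v] geval_sum[OF fV this(2), of k v]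
    show ?thesis using basis_wsum[OF assms(1) assms(2)[OF k]] by (simp only:)
  qed
qed

lemma key123:
  assumes "(p,q) \<in> Sigma {1,2,3}"
  shows "\<exists>n. colors p x + repeat_mset n {#k\<alpha>,k\<beta>#} = colors q x + repeat_mset n {#k\<gamma>,k1#}
                    \<or> colors p x + repeat_mset n {#k\<gamma>,k1#} = colors q x + repeat_mset n {#k\<alpha>,k\<beta>#}"
proof -
  define M where "M = colors p x"
  define N where "N = colors q x"
  have e1: "wsum 1 M = wsum 1 N" and e2: "wsum 2 M = wsum 2 N" and e3: "wsum 3 M = wsum 3 N"
  proof -
    have m: "1 \<in> {1,2,3::nat}" "2 \<in> {1,2,3::nat}" "3 \<in> {1,2,3::nat}" by simp_all
    show "wsum 1 M = wsum 1 N" "wsum 2 M = wsum 2 N" "wsum 3 M = wsum 3 N"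
      unfolding M_def N_def by (rule sigma_wsum[OF assms m(1)], rule sigma_wsum[OF assms m(2)], rule sigma_wsum[OF assms m(3)])
  qed
  note e = e1[unfolded wsum_expand wt_vals] e2[unfolded wsum_expand wt_vals] e3[unfolded wsum_expand wt_vals]
  show ?thesis
  proof (cases "count N k1 \<le> count M k1")
    case True
    define n where "n = count M k1 - count N k1"
    have "M + repeat_mset n {#k\<alpha>,k\<beta>#} = N + repeat_mset n {#k\<gamma>,k1#}"
    proof (rule multiset_eqI)
      fix z
      show "count (M + repeat_mset n {#k\<alpha>,k\<beta>#}) z = count (N + repeat_mset n {#k\<gamma>,k1#}) z"
        using klein_cases[of z] e True kdist unfolding n_def by (auto simp: wsum_expand wt_vals; arith)
    qed
    then show ?thesis unfolding M_def N_def by blast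
  next
    case False
    define n where "n = count N k1 - count M k1"
    have "M + repeat_mset n {#k\<gamma>,k1#} = N + repeat_mset n {#k\<alpha>,k\<beta>#}"
    proof (rule multiset_eqI)
      fix z
      show "count (M + repeat_mset n {#k\<gamma>,k1#}) z = count (N + repeat_mset n {#k\<alpha>,k\<beta>#}) z"
        using klein_cases[of z] e False kdist unfolding n_def by (auto simp: wsum_expand wt_vals; arith)
    qed
    then show ?thesis unfolding M_def N_def by blast
  qed
qed


lemma key124:
  assumes "(p,q) \<in> Sigma {1,2,4}"
  shows "\<exists>n. colors p x + repeat_mset n {#k\<alpha>,k\<gamma>#} = colors q x + repeat_mset n {#k\<beta>,k1#}
                    \<or> colors p x + repeat_mset n {#k\<beta>,k1#} = colors q x + repeat_mset n {#k\<alpha>,k\<gamma>#}"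
proof -
  define M where "M = colors p x"
  define N where "N = colors q x"
  have e1: "wsum 1 M = wsum 1 N" and e2: "wsum 2 M = wsum 2 N" and e3: "wsum 4 M = wsum 4 N"
  proof -
    have m: "1 \<in> {1,2,4::nat}" "2 \<in> {1,2,4::nat}" "4 \<in> {1,2,4::nat}" by simp_all
    show "wsum 1 M = wsum 1 N" "wsum 2 M = wsum 2 N" "wsum 4 M = wsum 4 N"
      unfolding M_def N_def by (rule sigma_wsum[OF assms m(1)], rule sigma_wsum[OF assms m(2)], rule sigma_wsum[OF assms m(3)])
  qed
  note e = e1[unfolded wsum_expand wt_vals] e2[unfolded wsum_expand wt_vals] e3[unfolded wsum_expand wt_vals]
  show ?thesis
  proof (cases "count N k1 \<le> count M k1")
    case True
    define n where "n = count M k1 - count N k1"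
    have "M + repeat_mset n {#k\<alpha>,k\<gamma>#} = N + repeat_mset n {#k\<beta>,k1#}"
    proof (rule multiset_eqI)
      fix z
      show "count (M + repeat_mset n {#k\<alpha>,k\<gamma>#}) z = count (N + repeat_mset n {#k\<beta>,k1#}) z"
        using klein_cases[of z] e True kdist unfolding n_def by (auto simp: wsum_expand wt_vals; arith)
    qed
    then show ?thesis unfolding M_def N_def by blast
  next
    case False
    define n where "n = count N k1 - count M k1"
    have "M + repeat_mset n {#k\<beta>,k1#} = N + repeat_mset n {#k\<alpha>,k\<gamma>#}"
    proof (rule multiset_eqI)
      fix z
      show "count (M + repeat_mset n {#k\<beta>,k1#}) z = count (N + repeat_mset n {#k\<alpha>,k\<gamma>#}) z"
        using klein_cases[of z] e False kdist unfolding n_def by (auto simp: wsum_expand wt_vals; arith)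
    qed
    then show ?thesis unfolding M_def N_def by blast
  qed
qed


theorem lemma2p2:
  shows "is_basis B123 (Sigma {1, 2, 3}) \<and> is_basis B124 (Sigma {1, 2, 4})"
proof
  show "is_basis B123 (Sigma {1, 2, 3})"
    unfolding is_basis_def B123_def
  proof (intro set_eqI iffI)
    fix pq assume "pq \<in> {(p, q). eq_conseq (basis_set k\<alpha> k\<beta> k\<gamma> k1) p q}"
    then obtain p q where pq: "pq = (p,q)" "eq_conseq (basis_set k\<alpha> k\<beta> k\<gamma> k1) p q" by auto
    have "(p,q) \<in> Sigma {1,2,3}"
    proof (rule sound[OF _ pq(2)])
      fix p q assume "(p,q) \<in> basis_set k\<alpha> k\<beta> k\<gamma> k1"
      then show "(p,q) \<in> Sigma {1,2,3}"
        by (rule basis_sigma) (auto simp: wt_def k1_def k\<alpha>_def k\<beta>_def k\<gamma>_def)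
    qed
    then show "pq \<in> Sigma {1,2,3}" using pq by simp
  next
    fix pq assume h: "pq \<in> Sigma {1,2,3}"
    obtain p q where pq: "pq = (p,q)" by fastforce
    have "eq_conseq (basis_set k\<alpha> k\<beta> k\<gamma> k1) p q"
      by (rule complete) (use kdist key123[of p q] h pq in auto)
    then show "pq \<in> {(p, q). eq_conseq (basis_set k\<alpha> k\<beta> k\<gamma> k1) p q}" using pq by simp
  qed
next
  show "is_basis B124 (Sigma {1, 2, 4})"
    unfolding is_basis_def B124_def
  proof (intro set_eqI iffI)
    fix pq assume "pq \<in> {(p, q). eq_conseq (basis_set k\<alpha> k\<gamma> k\<beta> k1) p q}"
    then obtain p q where pq: "pq = (p,q)" "eq_conseq (basis_set k\<alpha> k\<gamma> k\<beta> k1) p q" by auto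
    have "(p,q) \<in> Sigma {1,2,4}"
    proof (rule sound[OF _ pq(2)])
      fix p q assume "(p,q) \<in> basis_set k\<alpha> k\<gamma> k\<beta> k1"
      then show "(p,q) \<in> Sigma {1,2,4}"
        by (rule basis_sigma) (auto simp: wt_def k1_def k\<alpha>_def k\<beta>_def k\<gamma>_def)
    qed
    then show "pq \<in> Sigma {1,2,4}" using pq by simp
  next
    fix pq assume h: "pq \<in> Sigma {1,2,4}"
    obtain p q where pq: "pq = (p,q)" by fastforce
    have "eq_conseq (basis_set k\<alpha> k\<gamma> k\<beta> k1) p q"
      by (rule complete) (use kdist key124[of p q] h pq in auto)
    then show "pq \<in> {(p, q). eq_conseq (basis_set k\<alpha> k\<gamma> k\<beta> k1) p q}" using pq by simp
  qed
qed

end
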